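(* Let $n,m\ge1$ and let $w\in a^{\le n}(ba^n)^*b\cup\{\epsilon\}$ be such that $wa^nba^m$ is a good word. A word $u$ over $\{a,b\}$ belongs to $L^{\epsilon}_{\vdash_{\{wa^nb,\,wa^nba^m\}}}$ if and only if $u=u_1u_2u_3u_4$ with (1) $u_1\in L^{\epsilon}_{\vdash_{\{wa^nb,\,wa^n\}}}$; (2) $u_2\in L^{\epsilon}_{\vdash_{\{ba^m,\,a\}}}$; (3) $u_3\in L^{\epsilon}_{\vdash_{\{ba^m,\,b\}}}$; (4) $|u_4|_a<m$; (5) $|u_2u_4|_a\equiv0\pmod m$; (6) $|u_1|_a(|w|_b+1)=(|w|_a+n)|u|_b$; (7) $\frac{|u_2|_a+|u_4|_a}{m}-|u_2|_b\le |u_1|-\frac{|u_1|_a(|w|+n)}{|w|_a+n}$.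
   Context: For a set $X$ of words, $X^{\le n}=\bigcup_{i=0}^nX^i$. For words $u,v$, the shuffle $u \sqcup\!\sqcup v$ is the set of all words $u_1v_1\cdots u_kv_k$ with $k\ge 1$, $u=u_1\cdots u_k$, $v=v_1\cdots v_k$ (pieces possibly empty). For a finite set $I$ of words, $v \vdash_I w$ means $w \in v \sqcup\!\sqcup u$ for some $u\in I$; $\vdash_I^*$ is its reflexive-transitive closure and $L^{\epsilon}_{\vdash_I}=\{w : \epsilon \vdash_I^* w\}$. Let $E$ exchange $a$ and $b$ and $\tilde w$ be the reversal of $w$; $w$ is bad if one of $w,\tilde w,E(w),E(\tilde w)$ has a factor $a^kb^h$ ($k,h\ge2$) or $a^kba^lb^{m'}$ ($k>l\ge1$, $m'\ge1$), and good otherwise. *)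

theory Defs
  imports Complex_Main
begin

datatype letter = a | b

type_synonym word = "letter list"

definition cnt :: "letter \<Rightarrow> word \<Rightarrow> nat" where
  "cnt x u = length (filter (\<lambda>y. y = x) u)"

definition pw :: "letter \<Rightarrow> nat \<Rightarrow> word" where
  "pw x k = replicate k x"

definition ins_step :: "word set \<Rightarrow> word \<Rightarrow> word \<Rightarrow> bool" where
  "ins_step I v w \<longleftrightarrow> (\<exists>u\<in>I. w \<in> shuffles v u)"

definition L_eps :: "word set \<Rightarrow> word set" where
  "L_eps I = {w. (ins_step I)\<^sup>*\<^sup>* [] w}"

definition exch :: "word \<Rightarrow> word" where
  "exch w = map (\<lambda>x. case x of a \<Rightarrow> b | b \<Rightarrow> a) w"

definition has_factor :: "word \<Rightarrow> word \<Rightarrow> bool" where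
  "has_factor f w \<longleftrightarrow> (\<exists>x y. w = x @ f @ y)"

definition has_bad_factor :: "word \<Rightarrow> bool" where
  "has_bad_factor w \<longleftrightarrow>
     (\<exists>k h. k \<ge> 2 \<and> h \<ge> 2 \<and> has_factor (pw a k @ pw b h) w) \<or>
     (\<exists>k l m'. k > l \<and> l \<ge> 1 \<and> m' \<ge> 1 \<and> has_factor (pw a k @ [b] @ pw a l @ pw b m') w)"

definition bad :: "word \<Rightarrow> bool" where
  "bad w \<longleftrightarrow> has_bad_factor w \<or> has_bad_factor (rev w) \<or> has_bad_factor (exch w)
             \<or> has_bad_factor (exch (rev w))"

definition good :: "word \<Rightarrow> bool" where
  "good w \<longleftrightarrow> \<not> bad w"

end

theory Submission
  imports Defs
begin


lemma cnt_Nil[simp]: "cnt x [] = 0" by (simp add: cnt_def)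
lemma cnt_Cons[simp]: "cnt x (y # u) = (if y = x then 1 else 0) + cnt x u" by (simp add: cnt_def)
lemma cnt_append[simp]: "cnt x (u @ v) = cnt x u + cnt x v" by (simp add: cnt_def)
lemma cnt_replicate[simp]: "cnt x (replicate k y) = (if y = x then k else 0)" by (simp add: cnt_def)
lemma pw_simps[simp]: "pw x k = replicate k x" by (simp add: pw_def)

lemma cnt_shuffles: "z \<in> shuffles u v \<Longrightarrow> cnt x z = cnt x u + cnt x v"
proof -
  assume "z \<in> shuffles u v"
  hence "filter (\<lambda>y. y = x) z \<in> shuffles (filter (\<lambda>y. y = x) u) (filter (\<lambda>y. y = x) v)"
    using filter_shuffles by blast
  thus ?thesis unfolding cnt_def by (simp add: length_shuffles)
qed

lemma len_cnt: "length u = cnt a u + cnt b u"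
proof (induction u)
  case (Cons x u) thus ?case by (cases x) auto
qed simp

lemma cnt_take_le: "cnt x (take s u) \<le> cnt x u"
  by (metis append_take_drop_id cnt_append le_add1)

lemma shuffles_append:
  "zs \<in> shuffles xs ys \<Longrightarrow> zs' \<in> shuffles xs' ys' \<Longrightarrow> zs @ zs' \<in> shuffles (xs @ xs') (ys @ ys')"
proof (induction xs ys arbitrary: zs rule: shuffles.induct)
  case (1 ys)
  then show ?case
    by (induction ys arbitrary: zs) (auto intro: Cons_in_shuffles_rightI)
next
  case (2 xs)
  then show ?case
    by (induction xs arbitrary: zs) (auto intro: Cons_in_shuffles_leftI)
next
  case (3 x xs y ys)
  then show ?case by (auto intro: Cons_in_shuffles_leftI Cons_in_shuffles_rightI)
qed

lemma append_in_shuffles_split: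
  "xs @ ys \<in> shuffles v g \<Longrightarrow> \<exists>v1 v2 g1 g2. v = v1 @ v2 \<and> g = g1 @ g2 \<and> xs \<in> shuffles v1 g1 \<and> ys \<in> shuffles v2 g2"
proof (induction xs arbitrary: v g)
  case Nil
  then show ?case by (metis Nil_in_shufflesI append_Nil)
next
  case (Cons x xs)
  from Cons.prems have "(v \<noteq> [] \<and> hd v = x \<and> xs @ ys \<in> shuffles (tl v) g) \<or> (g \<noteq> [] \<and> hd g = x \<and> xs @ ys \<in> shuffles v (tl g))"
    using Cons_in_shuffles_iff by (metis append_Cons)
  then show ?case
  proof
    assume h: "v \<noteq> [] \<and> hd v = x \<and> xs @ ys \<in> shuffles (tl v) g"
    then obtain v1 v2 g1 g2 where "tl v = v1 @ v2" "g = g1 @ g2" "xs \<in> shuffles v1 g1" "ys \<in> shuffles v2 g2"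
      using Cons.IH by blast
    thus ?thesis using h
      by (intro exI[of _ "x # v1"] exI[of _ v2] exI[of _ g1] exI[of _ g2])
         (auto intro: Cons_in_shuffles_leftI simp: list.collapse[symmetric] dest: sym)
  next
    assume h: "g \<noteq> [] \<and> hd g = x \<and> xs @ ys \<in> shuffles v (tl g)"
    then obtain v1 v2 g1 g2 where "v = v1 @ v2" "tl g = g1 @ g2" "xs \<in> shuffles v1 g1" "ys \<in> shuffles v2 g2"
      using Cons.IH by blast
    thus ?thesis using h
      by (intro exI[of _ v1] exI[of _ v2] exI[of _ "x # g1"] exI[of _ g2])
         (auto intro: Cons_in_shuffles_rightI dest: sym)
  qed
qed



lemma L_eps_Nil: "[] \<in> L_eps I" by (simp add: L_eps_def)

lemma L_eps_step: "y \<in> L_eps I \<Longrightarrow> g \<in> I \<Longrightarrow> x \<in> shuffles y g \<Longrightarrow> x \<in> L_eps I"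
  unfolding L_eps_def ins_step_def
  by (auto intro: rtranclp.rtrancl_into_rtrancl)

lemma L_eps_induct[consumes 1, case_names Nil step]:
  assumes "x \<in> L_eps I" "P []"
    "\<And>y g x. y \<in> L_eps I \<Longrightarrow> P y \<Longrightarrow> g \<in> I \<Longrightarrow> x \<in> shuffles y g \<Longrightarrow> P x"
  shows "P x"
proof -
  have "(ins_step I)\<^sup>*\<^sup>* [] x" using assms(1) by (simp add: L_eps_def)
  thus ?thesis
  proof (induction rule: rtranclp_induct)
    case base thus ?case using assms(2) .
  next
    case (step y z)
    then show ?case using assms(3)[of y _ z] unfolding ins_step_def L_eps_def by blast
  qed
qed

fun Sh :: "word list \<Rightarrow> word set" where
  "Sh [] = {[]}"
| "Sh (v # vs) = (\<Union>y\<in>Sh vs. shuffles y v)"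

lemma Sh_L_eps: "x \<in> Sh vs \<Longrightarrow> set vs \<subseteq> I \<Longrightarrow> x \<in> L_eps I"
proof (induction vs arbitrary: x)
  case Nil thus ?case by (simp add: L_eps_Nil)
next
  case (Cons v vs)
  then obtain y where "y \<in> Sh vs" "x \<in> shuffles y v" by auto
  thus ?case using Cons by (auto intro: L_eps_step)
qed

lemma snoc_in_shuffles_left: "x \<in> shuffles y v \<Longrightarrow> x @ [c] \<in> shuffles (y @ [c]) v"
  using shuffles_append[of x y v "[c]" "[c]" "[]"] by simp

lemma snoc_in_shuffles_right: "x \<in> shuffles y v \<Longrightarrow> x @ [c] \<in> shuffles y (v @ [c])"
  using shuffles_append[of x y v "[c]" "[]" "[c]"] by simp

lemma Sh_snoc: "x \<in> Sh vs \<Longrightarrow> k < length vs \<Longrightarrow> x @ [c] \<in> Sh (vs[k := vs!k @ [c]])"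
proof (induction vs arbitrary: x k)
  case Nil thus ?case by simp
next
  case (Cons v vs)
  then obtain y where y: "y \<in> Sh vs" "x \<in> shuffles y v" by auto
  show ?case
  proof (cases k)
    case 0
    have "x @ [c] \<in> shuffles y (v @ [c])" using y(2) by (rule snoc_in_shuffles_right)
    thus ?thesis using 0 y(1) by auto
  next
    case (Suc k')
    with Cons.prems have "k' < length vs" by simp
    hence "y @ [c] \<in> Sh (vs[k' := vs!k' @ [c]])" using Cons.IH y by blast
    moreover have "x @ [c] \<in> shuffles (y @ [c]) v" using y(2) by (rule snoc_in_shuffles_left)
    ultimately show ?thesis using Suc by auto
  qed
qed

lemma Sh_replicate_Nil: "[] \<in> Sh (replicate N [])"
  by (induction N) auto

lemma L_eps_inv:
  assumes x: "x \<in> L_eps I"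
  and gen: "\<And>g s. g \<in> I \<Longrightarrow> R (cnt a (take s g)) (cnt b (take s g)) (cnt a g) (cnt b g) (1::nat)"
  and zero: "R 0 0 0 0 0"
  and add: "\<And>\<alpha>1 \<beta>1 A1 B1 N1 \<alpha>2 \<beta>2 A2 B2 N2. R \<alpha>1 \<beta>1 A1 B1 N1 \<Longrightarrow> R \<alpha>2 \<beta>2 A2 B2 N2 \<Longrightarrow>
     R (\<alpha>1+\<alpha>2) (\<beta>1+\<beta>2) (A1+A2) (B1+B2) (N1+N2)"
  shows "\<exists>N. \<forall>s. R (cnt a (take s x)) (cnt b (take s x)) (cnt a x) (cnt b x) N"
  using x
proof (induction rule: L_eps_induct)
  case Nil
  then show ?case using zero by (intro exI[of _ 0]) simp
next
  case (step y g x)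
  then obtain N where N: "\<forall>s. R (cnt a (take s y)) (cnt b (take s y)) (cnt a y) (cnt b y) N" by blast
  have "R (cnt a (take s x)) (cnt b (take s x)) (cnt a x) (cnt b x) (N+1)" for s
  proof -
    have "take s x @ drop s x \<in> shuffles y g" using \<open>x \<in> shuffles y g\<close> by simp
    then obtain y1 y2 g1 g2 where sp: "y = y1 @ y2" "g = g1 @ g2" "take s x \<in> shuffles y1 g1"
      by (meson append_in_shuffles_split)
    have y1: "take (length y1) y = y1" and g1: "take (length g1) g = g1" using sp by auto
    have "R (cnt a y1 + cnt a g1) (cnt b y1 + cnt b g1) (cnt a y + cnt a g) (cnt b y + cnt b g) (N+1)"
      using add[OF N[rule_format, of "length y1"] gen[OF \<open>g \<in> I\<close>, of "length g1"]] y1 g1 by simp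
    thus ?thesis using cnt_shuffles[OF sp(3)] cnt_shuffles[OF \<open>x \<in> shuffles y g\<close>] by simp
  qed
  thus ?case by blast
qed



fun P :: "nat \<Rightarrow> nat \<Rightarrow> nat \<Rightarrow> word" where
  "P i n 0 = []"
| "P i n (Suc \<beta>) = replicate i a @ [b] @ concat (replicate \<beta> (replicate n a @ [b]))"

definition cap :: "nat \<Rightarrow> nat \<Rightarrow> nat \<Rightarrow> nat" where
  "cap i n \<beta> = (if \<beta> = 0 then 0 else i + n*(\<beta>-1))"

definition pref :: "nat \<Rightarrow> nat \<Rightarrow> nat \<Rightarrow> nat \<Rightarrow> word" where
  "pref i n \<alpha> \<beta> = P i n \<beta> @ replicate (\<alpha> - cap i n \<beta>) a"

lemma concat_replicate_snoc: "concat (replicate (Suc k) x) = concat (replicate k x) @ x"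
  by (induction k) auto

lemma P_Suc_Suc: "P i n (Suc (Suc \<beta>)) = P i n (Suc \<beta>) @ replicate n a @ [b]"
  using concat_replicate_snoc[of \<beta> "replicate n a @ [b]"] by simp

lemma cnt_concat_replicate: "cnt x (concat (replicate k y)) = k * cnt x y"
  by (induction k) auto

lemma cnt_P_a: "cnt a (P i n \<beta>) = cap i n \<beta>"
  by (cases \<beta>) (auto simp: cap_def cnt_concat_replicate)

lemma cnt_P_b: "cnt b (P i n \<beta>) = \<beta>"
  by (cases \<beta>) (auto simp: cnt_concat_replicate)

lemma pref_snoc_a: "cap i n \<beta> \<le> \<alpha> \<Longrightarrow> pref i n \<alpha> \<beta> @ [a] = pref i n (Suc \<alpha>) \<beta>"
  unfolding pref_def by (simp add: Suc_diff_le replicate_append_same)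

lemma pref_snoc_b: "\<alpha> = i + n*\<beta> \<Longrightarrow> pref i n \<alpha> \<beta> @ [b] = pref i n \<alpha> (Suc \<beta>)"
proof (cases \<beta>)
  case 0
  then show ?thesis if "\<alpha> = i + n*\<beta>" using that by (simp add: pref_def cap_def)
next
  case (Suc \<beta>')
  assume "\<alpha> = i + n*\<beta>"
  then show ?thesis using Suc P_Suc_Suc[of i n \<beta>'] by (simp add: pref_def cap_def)
qed

definition seg :: "nat \<Rightarrow> nat \<Rightarrow> nat \<Rightarrow> nat \<Rightarrow> nat" where
  "seg c w k A = min w (A - (c + k*w))"

lemma seg_Suc: "seg c w k (Suc A) = seg c w k A + (if c + k*w \<le> A \<and> A < c + k*w + w then 1 else 0)"
  unfolding seg_def by (auto simp: min_def)

lemma seg_mono: "A \<le> A' \<Longrightarrow> seg c w k A \<le> seg c w k A'"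
  unfolding seg_def by (auto simp: min_def)

lemma seg_0: "seg c w k 0 = 0" unfolding seg_def by simp

lemma seg_sum: "(\<Sum>k<N. seg c w k A) = min (N*w) (A - c)"
proof (induction N)
  case 0 thus ?case by simp
next
  case (Suc N)
  have "(\<Sum>k<Suc N. seg c w k A) = min (N*w) (A - c) + min w (A - c - N*w)"
    using Suc by (simp add: seg_def diff_diff_add)
  also have "\<dots> = min (Suc N * w) (A - c)"
  proof -
    have "min (N*w) X + min w (X - N*w) = min (w + N*w) X" for X
      unfolding min_def by auto
    thus ?thesis by simp
  qed
  finally show ?case .
qed

definition alpha :: "nat \<Rightarrow> nat \<Rightarrow> nat \<Rightarrow> nat \<Rightarrow> nat \<Rightarrow> nat \<Rightarrow> nat \<Rightarrow> nat" where
  "alpha i n j m N k A = seg 0 i k A + (\<Sum>g<j. seg (i*N + g*(n*N)) n k A) + seg ((i+n*j)*N) m k A"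

definition beta :: "nat \<Rightarrow> nat \<Rightarrow> nat \<Rightarrow> nat" where
  "beta N k B = B div N + (if k < B mod N then 1 else 0)"

lemma alpha_0: "alpha i n j m N k 0 = 0" by (simp add: alpha_def seg_0)
lemma beta_0: "beta N k 0 = 0" by (simp add: beta_def)

lemma alpha_mono: "A \<le> A' \<Longrightarrow> alpha i n j m N k A \<le> alpha i n j m N k A'"
  unfolding alpha_def by (intro add_mono sum_mono seg_mono) auto

lemma alpha_sum:
  assumes "A \<le> (i+n*j)*N + m*N"
  shows "(\<Sum>k<N. alpha i n j m N k A) = A"
proof -
  have "(\<Sum>k<N. alpha i n j m N k A) = (\<Sum>k<N. seg 0 i k A) + (\<Sum>k<N. \<Sum>g<j. seg (i*N + g*(n*N)) n k A)
      + (\<Sum>k<N. seg ((i+n*j)*N) m k A)"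
    unfolding alpha_def by (simp add: sum.distrib)
  also have "(\<Sum>k<N. \<Sum>g<j. seg (i*N + g*(n*N)) n k A) = (\<Sum>g<j. \<Sum>k<N. seg (i*N + g*(n*N)) n k A)"
    by (rule sum.swap)
  also have "\<dots> = (\<Sum>g<j. seg (i*N) (n*N) g A)"
  proof (intro sum.cong refl)
    fix g
    show "(\<Sum>k<N. seg (i*N + g*(n*N)) n k A) = seg (i*N) (n*N) g A"
      unfolding seg_sum by (simp only: seg_def) (simp add: mult.commute)
  qed
  also have "\<dots> = min (j*(n*N)) (A - i*N)" by (simp add: seg_sum)
  finally have "(\<Sum>k<N. alpha i n j m N k A) = min (N*i) A + min (j*(n*N)) (A - i*N) + min (N*m) (A - (i+n*j)*N)"
    by (simp add: seg_sum)
  moreover have "(i+n*j)*N = i*N + j*(n*N)" by (simp add: algebra_simps)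
  moreover have "N*i = i*N" "N*m = m*N" by simp_all
  ultimately show ?thesis using assms by (simp add: min_def) arith
qed

lemma unique_incr:
  fixes f g :: "nat \<Rightarrow> nat"
  assumes le: "\<forall>k<N. f k \<le> g k" and s: "(\<Sum>k<N. g k) = (\<Sum>k<N. f k) + 1"
  shows "\<exists>k0<N. g k0 = Suc (f k0) \<and> (\<forall>k<N. k \<noteq> k0 \<longrightarrow> g k = f k)"
proof -
  define d where "d k = g k - f k" for k
  have "(\<Sum>k<N. g k) = (\<Sum>k<N. f k + d k)"
    using le by (intro sum.cong) (auto simp: d_def)
  hence s1: "(\<Sum>k<N. d k) = 1" using s by (simp add: sum.distrib)
  obtain k0 where k0: "k0 < N" "d k0 \<noteq> 0"
    using s1 by (metis lessThan_iff sum.neutral zero_neq_one)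
  have "(\<Sum>k<N. d k) = d k0 + (\<Sum>k\<in>{..<N}-{k0}. d k)"
    using k0 by (simp add: sum.remove)
  hence "d k0 = 1" "(\<Sum>k\<in>{..<N}-{k0}. d k) = 0" using s1 k0 by linarith+
  hence "\<forall>k\<in>{..<N}-{k0}. d k = 0" by simp
  show ?thesis
  proof (intro exI[of _ k0] conjI allI impI)
    show "k0 < N" by fact
    show "g k0 = Suc (f k0)" using \<open>d k0 = 1\<close> k0 le unfolding d_def by fastforce
  next
    fix k assume "k < N" "k \<noteq> k0"
    hence "d k = 0" using \<open>\<forall>k\<in>{..<N}-{k0}. d k = 0\<close> by simp
    thus "g k = f k" using le \<open>k < N\<close> unfolding d_def by fastforce
  qed
qed

lemma beta_Suc:
  assumes "k < N"
  shows "beta N k (Suc B) = beta N k B + (if k = B mod N then 1 else 0)"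
proof -
  have N: "N > 0" using assms by simp
  have "B mod N < N" using N by simp
  show ?thesis
  proof (cases "Suc (B mod N) = N")
    case True
    hence "Suc B mod N = 0" "Suc B div N = Suc (B div N)"
      using mod_Suc[of B N] div_Suc[of B N] by auto
    thus ?thesis using True assms unfolding beta_def by auto
  next
    case False
    hence "Suc B mod N = Suc (B mod N)" "Suc B div N = B div N"
      using mod_Suc[of B N] div_Suc[of B N] by auto
    thus ?thesis using False assms unfolding beta_def by auto
  qed
qed



lemma sum_if_less: "(\<Sum>g<j. if g < \<beta> then n else 0) = n * min \<beta> (j::nat)"
proof (induction j)
  case 0 thus ?case by simp
next
  case (Suc j)
  show ?case
  proof (cases "\<beta> \<le> j")
    case True thus ?thesis using Suc by (auto simp: min_def)
  next
    case False
    hence "min \<beta> (Suc j) = Suc j" "min \<beta> j = j" by auto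
    thus ?thesis using Suc False by simp
  qed
qed

lemma alpha_at_b:
  assumes k0: "k0 < N" and bj: "\<beta> \<le> j" and B: "B = \<beta>*N + k0"
  and L1: "i*(Suc B) \<le> A" and L2: "n*(Suc B) + i*N \<le> A + n*N"
  and U1: "1 \<le> j \<Longrightarrow> A \<le> i*N + n*B" and U2: "A + m*j*N \<le> (i+n*j)*N + m*B"
  and nj: "1 \<le> j \<Longrightarrow> 1 \<le> n"
  shows "alpha i n j m N k0 A = i + n*\<beta>"
proof -
  have s0: "seg 0 i k0 A = i"
  proof -
    have h: "i*(Suc k0) \<le> i*(Suc B)" by (rule mult_le_mono2) (simp add: B)
    have "i + i*k0 \<le> A" using order_trans[OF h L1] by simp
    thus ?thesis unfolding seg_def by (simp add: mult.commute)
  qed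
  have sg: "seg (i*N + g*(n*N)) n k0 A = (if g < \<beta> then n else 0)" if "g < j" for g
  proof (cases "g < \<beta>")
    case True
    hence "Suc g * (n*N) \<le> \<beta>*(n*N)" by (intro mult_le_mono1) simp
    hence h1: "n*N + g*(n*N) \<le> \<beta>*(n*N)" by simp
    have h2: "n*(Suc B) = \<beta>*(n*N) + k0*n + n" using B by (simp add: algebra_simps)
    have "i*N + g*(n*N) + k0*n + n \<le> A" using L2 h1 h2 by linarith
    thus ?thesis using True unfolding seg_def by simp
  next
    case False
    hence h1: "\<beta>*(n*N) \<le> g*(n*N)" by (intro mult_le_mono1) simp
    have h2: "n*B = \<beta>*(n*N) + k0*n" using B by (simp add: algebra_simps)
    have "1 \<le> j" using that by simp
    hence "A \<le> i*N + g*(n*N) + k0*n" using U1 h1 h2 by linarith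
    thus ?thesis using False unfolding seg_def by simp
  qed
  have st: "seg ((i+n*j)*N) m k0 A = 0"
  proof (cases "\<beta> = j")
    case True
    have "m*B = m*j*N + k0*m" using B True by (simp add: algebra_simps)
    hence "A \<le> (i+n*j)*N + k0*m" using U2 by simp
    thus ?thesis unfolding seg_def by simp
  next
    case False
    hence "\<beta> < j" "1 \<le> j" using bj by auto
    have "Suc k0 * n \<le> N * n" using k0 by (intro mult_le_mono1) simp
    hence h1: "k0*n + n \<le> n*N" by (simp add: mult.commute)
    have "Suc \<beta> * (n*N) \<le> j*(n*N)" using \<open>\<beta><j\<close> by (intro mult_le_mono1) simp
    hence h2: "n*N + \<beta>*(n*N) \<le> j*(n*N)" by simp
    have h3: "n*B = \<beta>*(n*N) + k0*n" using B by (simp add: algebra_simps)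
    have h4: "(i+n*j)*N = i*N + j*(n*N)" by (simp add: algebra_simps)
    have "A \<le> (i+n*j)*N + k0*m" using U1[OF \<open>1\<le>j\<close>] h1 h2 h3 h4 by linarith
    thus ?thesis unfolding seg_def by simp
  qed
  have "(\<Sum>g<j. seg (i*N + g*(n*N)) n k0 A) = (\<Sum>g<j. if g < \<beta> then n else 0)"
    using sg by (intro sum.cong) auto
  also have "\<dots> = n*\<beta>" using sum_if_less[where j=j and \<beta>=\<beta> and n=n] bj by (simp add: min_def)
  finally show ?thesis using s0 st unfolding alpha_def by simp
qed

lemma alpha_final:
  assumes k: "k < N" and tN: "t \<le> N"
  shows "alpha i n j m N k ((i+n*j)*N + m*t) = i + n*j + (if k < t then m else 0)"
proof -
  define A where "A = (i+n*j)*N + m*t"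
  have h4: "(i+n*j)*N = i*N + j*(n*N)" by (simp add: algebra_simps)
  have "Suc k * i \<le> N * i" using k by (intro mult_le_mono1) simp
  hence "k*i + i \<le> A" unfolding A_def using h4 by (simp add: mult.commute)
  hence s0: "seg 0 i k A = i" unfolding seg_def by simp
  have sg: "seg (i*N + g*(n*N)) n k A = n" if "g < j" for g
  proof -
    have "Suc k * n \<le> N * n" using k by (intro mult_le_mono1) simp
    hence h1: "k*n + n \<le> n*N" by (simp add: mult.commute)
    have "Suc g * (n*N) \<le> j*(n*N)" using that by (intro mult_le_mono1) simp
    hence h2: "n*N + g*(n*N) \<le> j*(n*N)" by simp
    have "i*N + g*(n*N) + k*n + n \<le> A" unfolding A_def using h1 h2 h4 by linarith
    thus ?thesis unfolding seg_def by simp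
  qed
  have st: "seg ((i+n*j)*N) m k A = (if k < t then m else 0)"
  proof (cases "k < t")
    case True
    have "Suc k * m \<le> t * m" using True by (intro mult_le_mono1) simp
    hence "k*m + m \<le> m*t" by (simp add: mult.commute)
    thus ?thesis using True unfolding seg_def A_def by simp
  next
    case False
    have "t * m \<le> k * m" using False by (intro mult_le_mono1) simp
    thus ?thesis using False unfolding seg_def A_def by (simp add: mult.commute)
  qed
  have "(\<Sum>g<j. seg (i*N + g*(n*N)) n k A) = (\<Sum>g<j. n)"
    using sg by (intro sum.cong) auto
  thus ?thesis using s0 st unfolding alpha_def A_def[symmetric] by (simp add: mult.commute)
qed

lemma beta_final:
  assumes "k < N" shows "beta N k ((j+1)*N) = j+1"
  using assms unfolding beta_def by simp

lemma map_upd_eq: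
  assumes "k0 < N" "G k0 = F k0 @ [c]" "\<forall>k<N. k \<noteq> k0 \<longrightarrow> G k = F k"
  shows "map G [0..<N] = (map F [0..<N])[k0 := F k0 @ [c]]"
  using assms by (intro nth_equalityI) (auto simp: nth_list_update)

lemma core:
  fixes i n j m N t :: nat and u :: word
  assumes nj: "1 \<le> j \<Longrightarrow> 1 \<le> n"
  and tb: "cnt b u = (j+1)*N" and ta: "cnt a u = (i+n*j)*N + m*t"
  and L1: "\<And>s. i * cnt b (take s u) \<le> cnt a (take s u)"
  and L2: "\<And>s. n * cnt b (take s u) + i*N \<le> cnt a (take s u) + n*N"
  and U1: "\<And>s. 1 \<le> j \<Longrightarrow> cnt a (take s u) \<le> i*N + n * cnt b (take s u)"
  and U2: "\<And>s. cnt a (take s u) + m*j*N \<le> (i+n*j)*N + m * cnt b (take s u)"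
  shows "u \<in> Sh (map (\<lambda>k. P i n (j+1) @ replicate (if k < t then m else 0) a) [0..<N])"
proof -
  have "cnt a u + m*j*N \<le> (i+n*j)*N + m * cnt b u" using U2[of "length u"] by simp
  hence "m*t \<le> m*N" using ta tb by (simp add: algebra_simps)
  define t' where "t' = (if m = 0 then 0 else t)"
  have t'N: "t' \<le> N" using \<open>m*t \<le> m*N\<close> unfolding t'_def by auto
  have ta': "cnt a u = (i+n*j)*N + m*t'" using ta unfolding t'_def by auto
  have tt': "(if k < t then m else 0) = (if k < t' then m else 0)" for k unfolding t'_def by auto
  define F where "F s k = pref i n (alpha i n j m N k (cnt a (take s u))) (beta N k (cnt b (take s u)))" for s k
  have inv: "take s u \<in> Sh (map (F s) [0..<N]) \<and>
     (\<forall>k<N. cap i n (beta N k (cnt b (take s u))) \<le> alpha i n j m N k (cnt a (take s u)))"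
    if "s \<le> length u" for s
    using that
  proof (induction s)
    case 0
    have "map (F 0) [0..<N] = replicate N []"
      by (intro nth_equalityI) (auto simp: F_def alpha_0 beta_0 pref_def cap_def)
    thus ?case using Sh_replicate_Nil by (simp add: alpha_0 beta_0 cap_def)
  next
    case (Suc s)
    hence sl: "s < length u" by simp
    from Suc have IH1: "take s u \<in> Sh (map (F s) [0..<N])"
      and IH2: "\<forall>k<N. cap i n (beta N k (cnt b (take s u))) \<le> alpha i n j m N k (cnt a (take s u))"
      by auto
    define A where "A = cnt a (take s u)"
    define B where "B = cnt b (take s u)"
    have tS: "take (Suc s) u = take s u @ [u!s]" using sl by (simp add: take_Suc_conv_app_nth)
    show ?case
    proof (cases "u!s")
      case a
      have cS: "cnt a (take (Suc s) u) = Suc A" "cnt b (take (Suc s) u) = B"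
        using tS a unfolding A_def B_def by auto
      have "Suc A \<le> cnt a u" using cS(1) cnt_take_le[of a "Suc s" u] by simp
      hence AS: "Suc A \<le> (i+n*j)*N + m*N" using ta' t'N
        by (metis add_le_mono le_refl mult_le_mono2 order_trans)
      have "\<exists>k0<N. alpha i n j m N k0 (Suc A) = Suc (alpha i n j m N k0 A) \<and>
          (\<forall>k<N. k \<noteq> k0 \<longrightarrow> alpha i n j m N k (Suc A) = alpha i n j m N k A)"
      proof (rule unique_incr)
        show "(\<Sum>k<N. alpha i n j m N k (Suc A)) = (\<Sum>k<N. alpha i n j m N k A) + 1"
          using alpha_sum[OF AS] alpha_sum[of A i n j N m] AS by simp
      qed (auto intro: alpha_mono)
      then obtain k0 where k0: "k0 < N" "alpha i n j m N k0 (Suc A) = Suc (alpha i n j m N k0 A)"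
        "\<forall>k<N. k \<noteq> k0 \<longrightarrow> alpha i n j m N k (Suc A) = alpha i n j m N k A" by blast
      have FS: "F (Suc s) k0 = F s k0 @ [a]"
        unfolding F_def cS using k0(2) pref_snoc_a IH2 k0(1) unfolding A_def B_def by simp
      have FO: "\<forall>k<N. k \<noteq> k0 \<longrightarrow> F (Suc s) k = F s k"
        unfolding F_def cS using k0(3) unfolding A_def B_def by simp
      have "map (F (Suc s)) [0..<N] = (map (F s) [0..<N])[k0 := (map (F s) [0..<N])!k0 @ [a]]"
        using map_upd_eq[OF k0(1) FS FO] k0(1) by simp
      hence m1: "take (Suc s) u \<in> Sh (map (F (Suc s)) [0..<N])"
        using Sh_snoc[OF IH1, of k0 a] k0(1) tS a by simp
      have "\<forall>k<N. cap i n (beta N k B) \<le> alpha i n j m N k (Suc A)"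
        using IH2 alpha_mono[of A "Suc A"] unfolding A_def B_def by (meson le_SucI order_refl order_trans)
      thus ?thesis using m1 cS by simp
    next
      case b
      have cS: "cnt a (take (Suc s) u) = A" "cnt b (take (Suc s) u) = Suc B"
        using tS b unfolding A_def B_def by auto
      have "Suc B \<le> cnt b u" using cS(2) cnt_take_le[of b "Suc s" u] by simp
      hence BS: "Suc B \<le> (j+1)*N" using tb by simp
      hence Npos: "N > 0" by (cases N) auto
      define k0 where "k0 = B mod N"
      define \<beta> where "\<beta> = B div N"
      have k0N: "k0 < N" unfolding k0_def using Npos by simp
      have Bdec: "B = \<beta>*N + k0" unfolding k0_def \<beta>_def by simp
      have "\<beta>*N < (j+1)*N" using BS Bdec by linarith
      hence bj: "\<beta> \<le> j" by (metis Suc_eq_plus1 less_Suc_eq_le mult_less_cancel2)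
      have al: "alpha i n j m N k0 A = i + n*\<beta>"
      proof (rule alpha_at_b[OF k0N bj Bdec])
        show "i * Suc B \<le> A" using L1[of "Suc s"] cS by simp
        show "n * Suc B + i * N \<le> A + n * N" using L2[of "Suc s"] cS by simp
        show "A \<le> i * N + n * B" if "1 \<le> j" using U1[of s, OF that] unfolding A_def B_def .
        show "A + m * j * N \<le> (i + n * j) * N + m * B" using U2[of s] unfolding A_def B_def .
        show "1 \<le> n" if "1 \<le> j" using nj that .
      qed
      have bk0: "beta N k0 B = \<beta>" unfolding beta_def k0_def \<beta>_def by simp
      have bS: "beta N k (Suc B) = beta N k B + (if k = k0 then 1 else 0)" if "k < N" for k
        using beta_Suc[OF that] unfolding k0_def .
      have FS: "F (Suc s) k0 = F s k0 @ [b]"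
        unfolding F_def cS using bS[OF k0N] bk0 al pref_snoc_b unfolding A_def B_def by simp
      have FO: "\<forall>k<N. k \<noteq> k0 \<longrightarrow> F (Suc s) k = F s k"
        unfolding F_def cS using bS unfolding A_def B_def by simp
      have "map (F (Suc s)) [0..<N] = (map (F s) [0..<N])[k0 := (map (F s) [0..<N])!k0 @ [b]]"
        using map_upd_eq[OF k0N FS FO] k0N by simp
      hence m1: "take (Suc s) u \<in> Sh (map (F (Suc s)) [0..<N])"
        using Sh_snoc[OF IH1, of k0 b] k0N tS b by simp
      have "\<forall>k<N. cap i n (beta N k (Suc B)) \<le> alpha i n j m N k A"
      proof (intro allI impI)
        fix k assume kN: "k < N"
        show "cap i n (beta N k (Suc B)) \<le> alpha i n j m N k A"
        proof (cases "k = k0")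
          case True thus ?thesis using bS[OF kN] bk0 al by (simp add: cap_def)
        next
          case False thus ?thesis using bS[OF kN] IH2 kN unfolding A_def B_def by simp
        qed
      qed
      thus ?thesis using m1 cS by simp
    qed
  qed
  have eq: "map (F (length u)) [0..<N] = map (\<lambda>k. P i n (j+1) @ replicate (if k < t then m else 0) a) [0..<N]"
  proof (intro map_cong refl)
    fix k assume "k \<in> set [0..<N]"
    hence k: "k < N" by simp
    show "F (length u) k = P i n (j+1) @ replicate (if k < t then m else 0) a"
      unfolding F_def using alpha_final[OF k t'N, of i n j m] beta_final[OF k, of j] ta' tb tt'[of k]
      by (simp add: pref_def cap_def)
  qed
  have mem: "u \<in> Sh (map (F (length u)) [0..<N])" using inv[of "length u"] by simp
  show ?thesis using mem by (simp only: eq)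
qed



definition condP :: "nat \<Rightarrow> nat \<Rightarrow> nat \<Rightarrow> nat \<Rightarrow> nat \<Rightarrow> nat \<Rightarrow> nat \<Rightarrow> bool" where
  "condP i n j m N \<alpha> \<beta> \<longleftrightarrow> i*\<beta> \<le> \<alpha> \<and> n*\<beta> + i*N \<le> \<alpha> + n*N \<and> (1 \<le> j \<longrightarrow> \<alpha> \<le> i*N + n*\<beta>)
     \<and> \<alpha> + m*j*N \<le> (i+n*j)*N + m*\<beta>"

lemma condP_add:
  "condP i n j m N1 \<alpha>1 \<beta>1 \<Longrightarrow> condP i n j m N2 \<alpha>2 \<beta>2 \<Longrightarrow> condP i n j m (N1+N2) (\<alpha>1+\<alpha>2) (\<beta>1+\<beta>2)"
  unfolding condP_def by (auto simp: algebra_simps)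

lemma condP_0: "condP i n j m 0 0 0" unfolding condP_def by simp

lemma P_Suc: "P i n (Suc \<beta>) = P i n \<beta> @ replicate (if \<beta> = 0 then i else n) a @ [b]"
proof (cases \<beta>)
  case 0 thus ?thesis by simp
next
  case (Suc \<beta>')
  show ?thesis unfolding Suc P_Suc_Suc by simp
qed

lemma take_P:
  "\<exists>\<beta>' r'. take s (P i n \<beta> @ replicate r a) = P i n \<beta>' @ replicate r' a \<and>
     ((\<beta>' = \<beta> \<and> r' \<le> r) \<or> (\<beta>' < \<beta> \<and> r' \<le> (if \<beta>' = 0 then i else n)))"
proof (induction \<beta> arbitrary: s r)
  case 0
  show ?case by (intro exI[of _ 0] exI[of _ "min s r"]) (simp add: take_replicate)
next
  case (Suc \<beta>0)
  define g where "g = (if \<beta>0 = 0 then i else n)"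
  define X where "X = P i n \<beta>0 @ replicate g a"
  have eq: "P i n (Suc \<beta>0) @ replicate r a = X @ [b] @ replicate r a"
    unfolding X_def g_def by (simp add: P_Suc[of i n \<beta>0] del: P.simps(2))
  show ?case
  proof (cases "s \<le> length X")
    case True
    hence "take s (P i n (Suc \<beta>0) @ replicate r a) = take s X" unfolding eq by simp
    moreover obtain \<beta>' r' where "take s X = P i n \<beta>' @ replicate r' a"
      "(\<beta>' = \<beta>0 \<and> r' \<le> g) \<or> (\<beta>' < \<beta>0 \<and> r' \<le> (if \<beta>' = 0 then i else n))"
      using Suc.IH[of s g] unfolding X_def by blast
    ultimately show ?thesis unfolding g_def
      by (intro exI[of _ \<beta>'] exI[of _ r']) auto
  next
    case False
    hence e: "s - length X = Suc (s - length X - 1)" by simp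
    have t1: "take s (P i n (Suc \<beta>0) @ replicate r a) = X @ [b] @ replicate (min (s - length X - 1) r) a"
    proof -
      have "take s (P i n (Suc \<beta>0) @ replicate r a) = X @ take (s - length X) (b # replicate r a)"
        unfolding eq using False by simp
      also have "\<dots> = X @ b # take (s - length X - 1) (replicate r a)"
        using e by (metis take_Suc_Cons)
      also have "\<dots> = X @ [b] @ replicate (min (s - length X - 1) r) a" by simp
      finally show ?thesis .
    qed
    have t2: "X @ [b] = P i n (Suc \<beta>0)" unfolding X_def g_def
      by (simp add: P_Suc[of i n \<beta>0] del: P.simps(2))
    have t3: "take s (P i n (Suc \<beta>0) @ replicate r a) = P i n (Suc \<beta>0) @ replicate (min (s - length X - 1) r) a"
    proof -
      have "take s (P i n (Suc \<beta>0) @ replicate r a) = (X @ [b]) @ replicate (min (s - length X - 1) r) a"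
        using t1 by (simp only: append.assoc)
      thus ?thesis by (simp only: t2)
    qed
    show ?thesis
      by (rule exI[of _ "Suc \<beta>0"], rule exI[of _ "min (s - length X - 1) r"], rule conjI[OF t3]) simp
  qed
qed

lemma gen_cond:
  assumes "i \<le> n" "1 \<le> j \<Longrightarrow> m \<le> n" "m' \<le> m"
  shows "condP i n j m 1 (cnt a (take s (P i n (Suc j) @ replicate m' a))) (cnt b (take s (P i n (Suc j) @ replicate m' a)))"
proof -
  obtain \<beta>' r' where t: "take s (P i n (Suc j) @ replicate m' a) = P i n \<beta>' @ replicate r' a"
    and c: "(\<beta>' = Suc j \<and> r' \<le> m') \<or> (\<beta>' < Suc j \<and> r' \<le> (if \<beta>' = 0 then i else n))"
    using take_P by blast
  have mj: "m*j \<le> n*j"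
  proof (cases "j = 0")
    case False thus ?thesis using assms(2) by simp
  qed simp
  have ij: "i*j \<le> n*j" using assms(1) by simp
  have ij2: "i*j \<le> j*n" by (metis assms(1) mult.commute mult_le_mono1)
  have "condP i n j m 1 (cap i n \<beta>' + r') \<beta>'"
  proof (cases "\<beta>' = Suc j")
    case True
    hence r: "r' \<le> m" using c assms(3) by auto
    have A: "cap i n \<beta>' + r' = i + n*j + r'" using True by (simp add: cap_def)
    have c0: "i + i*j \<le> i + n*j + r'" using ij by linarith
    have c1: "i*(Suc j) \<le> i + n*j + r'" using c0 by simp
    have c2: "n*(Suc j) + i*1 \<le> i + n*j + r' + n*1" by simp
    have c3: "1 \<le> j \<longrightarrow> i + n*j + r' \<le> i*1 + n*(Suc j)" using r assms(2) by auto
    have c4: "i + n*j + r' + m*j*1 \<le> (i + n*j)*1 + m*(Suc j)" using r by simp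
    show ?thesis unfolding condP_def A using True c1 c2 c3 c4 by simp
  next
    case False
    hence lt: "\<beta>' < Suc j" using c by auto
    show ?thesis
    proof (cases \<beta>')
      case 0
      hence ri: "r' \<le> i" using c by auto
      have c4: "r' + m*j \<le> i + n*j" using ri mj by linarith
      show ?thesis using 0 ri c4 assms(1) unfolding condP_def cap_def by auto
    next
      case (Suc \<gamma>)
      hence r: "r' \<le> n" using c False by auto
      have gj: "Suc \<gamma> \<le> j" using Suc lt by simp
      hence j1: "1 \<le> j" by simp
      have "i*\<gamma> \<le> n*\<gamma>" using assms(1) by simp
      moreover obtain d where d: "n = m + d" using assms(2)[OF j1] by (metis le_add_diff_inverse)
      moreover have "d * Suc \<gamma> \<le> d * j" using gj by (rule mult_le_mono2)
      ultimately show ?thesis using Suc r unfolding condP_def cap_def by (auto simp: algebra_simps)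
    qed
  qed
  thus ?thesis unfolding t by (simp add: cnt_P_a cnt_P_b)
qed



lemma last_two:
  assumes "g1 @ g2 = Y @ [a, b]" "set g2 \<subseteq> {b}"
  shows "g1 = Y @ [a, b] \<or> g1 = Y @ [a]"
proof -
  have h: "rev g2 @ rev g1 = b # a # rev Y" using arg_cong[OF assms(1), of rev] by simp
  have s: "set (rev g2) \<subseteq> {b}" using assms(2) by simp
  show ?thesis
  proof (cases "rev g2")
    case Nil thus ?thesis using h by (metis append_Nil rev_is_rev_conv rev_append rev.simps(1) rev.simps(2) append.assoc append_Cons append_Nil)
  next
    case (Cons c r)
    show ?thesis
    proof (cases r)
      case Nil
      hence "rev g1 = a # rev Y" using h Cons by simp
      hence "g1 = Y @ [a]" by (metis rev_rev_ident rev.simps(2))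
      thus ?thesis by simp
    next
      case (Cons d r')
      hence "d = a" using h \<open>rev g2 = c # r\<close> by simp
      moreover have "d \<in> set (rev g2)" using Cons \<open>rev g2 = c # r\<close> by simp
      ultimately show ?thesis using s by auto
    qed
  qed
qed

lemma letters_b: "set xs \<subseteq> {b} \<Longrightarrow> xs = replicate (length xs) b"
  by (metis empty_iff insert_iff replicate_length_same subset_iff)

lemma restrict_b:
  assumes "z \<in> L_eps {Y @ [a, b]}"
  shows "\<forall>x q. z = x @ replicate q b \<longrightarrow> x \<in> L_eps {Y @ [a, b], Y @ [a]}"
  using assms
proof (induction rule: L_eps_induct)
  case Nil
  then show ?case by (simp add: L_eps_Nil)
next
  case (step y g z)
  show ?case
  proof (intro allI impI)
    fix x q assume zx: "z = x @ replicate q b"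
    have g: "g = Y @ [a, b]" using step by simp
    obtain y1 y2 g1 g2 where sp: "y = y1 @ y2" "g = g1 @ g2" "x \<in> shuffles y1 g1"
      "replicate q b \<in> shuffles y2 g2"
      using append_in_shuffles_split[of x "replicate q b" y g] step zx by blast
    have "set y2 \<union> set g2 \<subseteq> {b}" using set_shuffles[OF sp(4)] by (auto)
    hence sy: "set y2 \<subseteq> {b}" and sg: "set g2 \<subseteq> {b}" by auto
    have "y = y1 @ replicate (length y2) b" using sp(1) letters_b[OF sy] by metis
    hence y1: "y1 \<in> L_eps {Y @ [a, b], Y @ [a]}" using step.IH by blast
    have "g1 \<in> {Y @ [a, b], Y @ [a]}" using last_two[of g1 g2 Y] sp(2) g sg by auto
    thus "x \<in> L_eps {Y @ [a, b], Y @ [a]}" using L_eps_step[OF y1 _ sp(3)] by blast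
  qed
qed

lemma append_in_shuffles: "xs @ ys \<in> shuffles xs ys"
  using shuffles_append[of xs xs "[]" ys "[]" ys] by simp

lemma replicate_a_mem: "[a] \<in> I \<Longrightarrow> replicate r a \<in> L_eps I"
proof (induction r)
  case 0 thus ?case by (simp add: L_eps_Nil)
next
  case (Suc r)
  have "replicate (Suc r) a = replicate r a @ [a]" by (simp add: replicate_append_same)
  thus ?case using L_eps_step[OF Suc.IH[OF Suc.prems] Suc.prems] append_in_shuffles by metis
qed

lemma not_b_a: "c \<noteq> b \<Longrightarrow> c = a" by (cases c) auto

lemma suffix_mem:
  assumes "\<forall>s. m * cnt b (drop s x) \<le> cnt a (drop s x)"
  shows "x \<in> L_eps {b # replicate m a, [a]}"
  using assms
proof (induction "length x" arbitrary: x rule: less_induct)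
  case less
  show ?case
  proof (cases "b \<in> set x")
    case False
    hence "x = replicate (length x) a" using not_b_a by (metis replicate_length_same)
    thus ?thesis using replicate_a_mem[of "{b # replicate m a, [a]}"] by (metis insertCI)
  next
    case True
    then obtain y z where x: "x = y @ b # z" and zb: "b \<notin> set z" by (meson split_list_last)
    define r where "r = length z"
    have z: "z = replicate r a" unfolding r_def using zb not_b_a by (metis replicate_length_same)
    have "m * cnt b (drop (length y) x) \<le> cnt a (drop (length y) x)" using less.prems by blast
    hence rm: "m \<le> r" using x z by simp
    define x' where "x' = y @ replicate (r - m) a"
    have len: "length x' < length x" unfolding x'_def using x z rm by simp
    have suf: "\<forall>s. m * cnt b (drop s x') \<le> cnt a (drop s x')"
    proof
      fix s
      show "m * cnt b (drop s x') \<le> cnt a (drop s x')"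
      proof (cases "s \<le> length y")
        case True
        have "m * cnt b (drop s x) \<le> cnt a (drop s x)" using less.prems by blast
        thus ?thesis using True x z rm unfolding x'_def by (simp add: algebra_simps)
      next
        case False
        thus ?thesis unfolding x'_def by simp
      qed
    qed
    have x'mem: "x' \<in> L_eps {b # replicate m a, [a]}" using less.hyps[OF len suf] .
    have "b # replicate r a = (b # replicate m a) @ replicate (r - m) a"
      using rm by (simp add: replicate_add[symmetric])
    hence "b # replicate r a \<in> shuffles (replicate (r - m) a) (b # replicate m a)"
      using append_in_shuffles[of "b # replicate m a" "replicate (r - m) a"] shuffles_commutes by metis
    hence "y @ b # replicate r a \<in> shuffles (y @ replicate (r - m) a) ([] @ (b # replicate m a))"
      using shuffles_append[of y y "[]"] by simp
    hence "x \<in> shuffles x' (b # replicate m a)" unfolding x'_def using x z by simp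
    thus ?thesis using L_eps_step[OF x'mem] by blast
  qed
qed

lemma exists_take_cnt: "c \<le> cnt x u \<Longrightarrow> \<exists>s \<le> length u. cnt x (take s u) = c"
proof (induction u arbitrary: c)
  case Nil thus ?case by simp
next
  case (Cons y u)
  show ?case
  proof (cases "c = 0")
    case True thus ?thesis by (intro exI[of _ 0]) simp
  next
    case False
    show ?thesis
    proof (cases "y = x")
      case True
      have "c - 1 \<le> cnt x u" using Cons.prems True by simp
      then obtain s where "s \<le> length u" "cnt x (take s u) = c - 1" using Cons.IH by blast
      thus ?thesis using True \<open>c \<noteq> 0\<close> by (intro exI[of _ "Suc s"]) auto
    next
      case False
      have "c \<le> cnt x u" using Cons.prems False by simp
      then obtain s where "s \<le> length u" "cnt x (take s u) = c" using Cons.IH by blast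
      thus ?thesis using False by (intro exI[of _ "Suc s"]) auto
    qed
  qed
qed

lemma exists_min: "\<exists>k\<le>L. \<forall>k'\<le>L. (f::nat\<Rightarrow>int) k \<le> f k'"
proof (induction L)
  case 0 thus ?case by simp
next
  case (Suc L)
  then obtain k where k: "k \<le> L" "\<forall>k'\<le>L. f k \<le> f k'" by blast
  show ?case
  proof (cases "f (Suc L) \<le> f k")
    case True
    thus ?thesis using k by (intro exI[of _ "Suc L"]) (auto simp: le_Suc_eq)
  next
    case False
    thus ?thesis using k by (intro exI[of _ k]) (auto simp: le_Suc_eq)
  qed
qed

lemma good_mn:
  assumes g: "good (w @ pw a n @ [b] @ pw a m)" and w: "w = w' @ [b]" and n: "1 \<le> n"
  shows "m \<le> n"
proof (rule ccontr)
  assume "\<not> m \<le> n"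
  hence mn: "n < m" by simp
  have "rev (w @ pw a n @ [b] @ pw a m) = [] @ (pw a m @ [b] @ pw a n @ pw b 1) @ rev w'"
    using w by simp
  hence "has_factor (pw a m @ [b] @ pw a n @ pw b 1) (rev (w @ pw a n @ [b] @ pw a m))"
    unfolding has_factor_def by blast
  hence "has_bad_factor (rev (w @ pw a n @ [b] @ pw a m))"
    unfolding has_bad_factor_def using mn n by blast
  thus False using g unfolding good_def bad_def by blast
qed

lemma concat_rep_b: "concat (replicate k (b # xs)) @ [b] = b # concat (replicate k (xs @ [b]))"
  by (induction k) auto

lemma w_shape:
  assumes n: "1 \<le> n"
    and w: "w = [] \<or> (\<exists>i k. i \<le> n \<and> w = pw a i @ concat (replicate k (b # pw a n)) @ [b])"
    and g: "good (w @ pw a n @ [b] @ pw a m)"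
  shows "\<exists>i j. w @ replicate n a @ [b] = P i n (Suc j) \<and> i \<le> n \<and> (1 \<le> j \<longrightarrow> m \<le> n)
     \<and> cnt a w + n = i + n*j \<and> cnt b w = j \<and> 1 \<le> i + n*j"
  using w
proof
  assume "w = []"
  thus ?thesis using n by (intro exI[of _ n] exI[of _ 0]) simp
next
  assume "\<exists>i k. i \<le> n \<and> w = pw a i @ concat (replicate k (b # pw a n)) @ [b]"
  then obtain i k where ik: "i \<le> n" "w = replicate i a @ concat (replicate k (b # replicate n a)) @ [b]"
    by auto
  have mn: "m \<le> n" using good_mn[OF g _ n, of "replicate i a @ concat (replicate k (b # replicate n a))"] ik by simp
  have "w @ replicate n a @ [b] = replicate i a @ (concat (replicate k (b # replicate n a)) @ [b]) @ replicate n a @ [b]"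
    using ik by simp
  also have "\<dots> = replicate i a @ [b] @ concat (replicate k (replicate n a @ [b])) @ replicate n a @ [b]"
    by (simp add: concat_rep_b)
  also have "\<dots> = P i n (Suc (Suc k))"
    using concat_replicate_snoc[of k "replicate n a @ [b]"] by simp
  finally have e: "w @ replicate n a @ [b] = P i n (Suc (Suc k))" .
  have "cnt a w = i + k*n" "cnt b w = Suc k" using ik by (simp_all add: cnt_concat_replicate)
  thus ?thesis using e ik mn n by (intro exI[of _ i] exI[of _ "Suc k"]) (auto simp: algebra_simps)
qed



lemma condP_after:
  assumes "(i+n*j)*N \<le> \<alpha>" "\<alpha> + m*j*N \<le> (i+n*j)*N + m*\<beta>" "j*N \<le> \<beta>" "\<beta> \<le> Suc j * N"
    "i \<le> n" "1 \<le> j \<longrightarrow> m \<le> n"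
  shows "condP i n j m N \<alpha> \<beta>"
proof -
  have e1: "(i+n*j)*N = i*N + n*(j*N)" by (simp add: algebra_simps)
  have e2: "Suc j * N = N + j*N" by simp
  have "i*\<beta> \<le> i*(Suc j * N)" using assms(4) by (rule mult_le_mono2)
  moreover have "i*(j*N) \<le> n*(j*N)" using assms(5) by (rule mult_le_mono1)
  moreover have "i*(Suc j * N) = i*N + i*(j*N)" by (simp add: algebra_simps)
  ultimately have c1: "i*\<beta> \<le> \<alpha>" using assms(1) e1 by linarith
  have "n*\<beta> \<le> n*(Suc j * N)" using assms(4) by (rule mult_le_mono2)
  hence c2: "n*\<beta> + i*N \<le> \<alpha> + n*N" using assms(1) e1 e2 by (simp add: algebra_simps)
  have c3: "\<alpha> \<le> i*N + n*\<beta>" if "1 \<le> j"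
  proof -
    obtain e where e: "\<beta> = j*N + e" using assms(3) le_Suc_ex by blast
    have h1: "m*e \<le> n*e" using assms(6) that by simp
    have h2: "m*\<beta> = m*(j*N) + m*e" using e by (simp add: algebra_simps)
    have h3: "m*j*N = m*(j*N)" by simp
    have h4: "n*\<beta> = n*(j*N) + n*e" using e by (simp add: algebra_simps)
    show ?thesis using assms(2) h1 h2 h3 h4 e1 by linarith
  qed
  show ?thesis unfolding condP_def using c1 c2 c3 assms(2) by blast
qed

lemma take_append_cases:
  "take s (x @ y) = (if s \<le> length x then take s x else x @ take (s - length x) y)"
  by simp

lemma forward:
  fixes i n j m :: nat and u :: word
  assumes n: "1 \<le> n" and m: "1 \<le> m" and inl: "i \<le> n" and jm: "1 \<le> j \<longrightarrow> m \<le> n"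
    and D: "1 \<le> i + n*j"
    and u: "u \<in> L_eps {P i n (Suc j), P i n (Suc j) @ replicate m a}"
    and Y: "P i n (Suc j) = Y @ [a, b]"
  shows "\<exists>u1 u2 u3 u4 N. u = u1 @ u2 @ u3 @ u4
       \<and> u1 \<in> L_eps {Y @ [a, b], Y @ [a]}
       \<and> u2 \<in> L_eps {b # replicate m a, [a]}
       \<and> u3 \<in> L_eps {b # replicate m a, [b]}
       \<and> cnt a u4 < m
       \<and> cnt a (u2 @ u4) mod m = 0
       \<and> cnt a u1 = (i+n*j)*N \<and> cnt b u = Suc j * N \<and> j*N \<le> cnt b u1
       \<and> cnt a u2 + cnt a u4 \<le> m*(cnt b u1 - j*N + cnt b u2)"
proof -
  define D where "D = i + n*j"
  define W where "W = P i n (Suc j)"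
  define R where "R = (\<lambda>\<alpha> \<beta> A B N. condP i n j m N \<alpha> \<beta> \<and> B = Suc j * N \<and> D*N \<le> A \<and> m dvd (A - D*N))"
  have "\<exists>N. \<forall>s. R (cnt a (take s u)) (cnt b (take s u)) (cnt a u) (cnt b u) N"
  proof (rule L_eps_inv[OF u])
    fix g s assume g: "g \<in> {P i n (Suc j), P i n (Suc j) @ replicate m a}"
    then obtain m' where m': "m' \<le> m" "g = P i n (Suc j) @ replicate m' a" "m dvd m'"
      by (metis append_Nil2 dvd_0_right dvd_refl empty_replicate insertE le_refl singletonD zero_le)
    have "condP i n j m 1 (cnt a (take s g)) (cnt b (take s g))"
      using gen_cond[OF inl _ m'(1)] jm m'(2) by blast
    moreover have "cnt b g = Suc j" "cnt a g = D + m'" using m'(2)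
      by (simp_all add: cnt_concat_replicate D_def)
    ultimately show "R (cnt a (take s g)) (cnt b (take s g)) (cnt a g) (cnt b g) 1"
      unfolding R_def using m'(3) by simp
  next
    show "R 0 0 0 0 0" unfolding R_def by (simp add: condP_0)
  next
    fix \<alpha>1 \<beta>1 A1 B1 N1 \<alpha>2 \<beta>2 A2 B2 N2
    assume r1: "R \<alpha>1 \<beta>1 A1 B1 N1" and r2: "R \<alpha>2 \<beta>2 A2 B2 N2"
    have eq: "A1 + A2 - (D*N1 + D*N2) = (A1 - D*N1) + (A2 - D*N2)" using r1 r2 unfolding R_def
      by auto
    have d1: "m dvd (A1 - D*N1)" "m dvd (A2 - D*N2)" using r1 r2 unfolding R_def by auto
    have dv: "m dvd (A1 + A2 - (D*N1 + D*N2))" unfolding eq by (rule dvd_add[OF d1])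
    show "R (\<alpha>1+\<alpha>2) (\<beta>1+\<beta>2) (A1+A2) (B1+B2) (N1+N2)"
      using r1 r2 condP_add dv unfolding R_def by (auto simp: algebra_simps)
  qed
  then obtain N where RN: "\<And>s. R (cnt a (take s u)) (cnt b (take s u)) (cnt a u) (cnt b u) N" by blast
  have cP: "\<And>s. condP i n j m N (cnt a (take s u)) (cnt b (take s u))" using RN unfolding R_def by blast
  have tb: "cnt b u = Suc j * N" and KA: "D*N \<le> cnt a u" and dv: "m dvd (cnt a u - D*N)"
    using RN[of 0] unfolding R_def by auto
  define K where "K = D*N"
  obtain t where ta: "cnt a u = K + m*t" using dv KA unfolding K_def
    by (metis dvdE le_add_diff_inverse)
  obtain s1 where s1: "s1 \<le> length u" "cnt a (take s1 u) = K"
    using exists_take_cnt[of K a u] ta by auto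
  define u1 where "u1 = take s1 u"
  define r where "r = drop s1 u"
  define B1 where "B1 = cnt b u1"
  have B1le: "B1 \<le> Suc j * N" unfolding B1_def u1_def using cnt_take_le tb by metis
  have "K + m*j*N \<le> (i+n*j)*N + m*B1" using cP[of s1] s1 unfolding condP_def u1_def B1_def by simp
  hence "m*(j*N) \<le> m*B1" unfolding K_def D_def by (simp add: algebra_simps)
  hence jNB1: "j*N \<le> B1" using m by simp
  define pb where "pb = B1 - j*N"
  have B1e: "B1 = j*N + pb" unfolding pb_def using jNB1 by simp
  have rc: "cnt a (take k r) \<le> m*(pb + cnt b (take k r))" for k
  proof -
    have "take (s1 + k) u = u1 @ take k r" unfolding u1_def r_def by (simp add: take_add)
    hence "cnt a u1 + cnt a (take k r) + m*j*N \<le> (i+n*j)*N + m*(B1 + cnt b (take k r))"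
      using cP[of "s1+k"] unfolding condP_def B1_def by simp
    hence "K + cnt a (take k r) + m*(j*N) \<le> K + m*(j*N) + m*(pb + cnt b (take k r))"
      using s1 unfolding u1_def K_def D_def B1e by (simp add: algebra_simps)
    thus ?thesis by simp
  qed
  define F where "F k = int (m * cnt b (take k r)) - int (cnt a (take k r))" for k
  obtain ks where ks: "ks \<le> length r" "\<forall>k'\<le>length r. F ks \<le> F k'" using exists_min[of "length r" F] by blast
  define u2 where "u2 = take ks r"
  define r' where "r' = drop ks r"
  have lu2: "length u2 = ks" unfolding u2_def using ks by simp
  have suf: "\<forall>s. m * cnt b (drop s u2) \<le> cnt a (drop s u2)"
  proof
    fix s
    show "m * cnt b (drop s u2) \<le> cnt a (drop s u2)"
    proof (cases "s \<le> ks")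
      case True
      have tk: "take s u2 = take s r" unfolding u2_def using True by simp
      have sp: "cnt c u2 = cnt c (take s r) + cnt c (drop s u2)" for c
        by (metis append_take_drop_id cnt_append tk)
      have "F ks \<le> F s" using ks True by simp
      hence "int (m * cnt b u2) - int (cnt a u2) \<le> int (m * cnt b (take s r)) - int (cnt a (take s r))"
        unfolding F_def u2_def .
      hence "int (m * cnt b (drop s u2)) \<le> int (cnt a (drop s u2))"
        unfolding sp[of a] sp[of b] by (simp add: algebra_simps)
      thus ?thesis by (metis of_nat_le_iff of_nat_mult)
    next
      case False
      thus ?thesis using lu2 by simp
    qed
  qed
  have pr': "cnt a (take k r') \<le> m * cnt b (take k r')" for k
  proof -
    define k' where "k' = min k (length r')"
    have tk: "take k r' = take k' r'" unfolding k'_def by (simp add: min_def)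
    have kk: "ks + k' \<le> length r" unfolding k'_def r'_def using ks by simp
    have "take (ks + k') r = u2 @ take k' r'" unfolding u2_def r'_def by (simp add: take_add)
    moreover have "F ks \<le> F (ks + k')" using ks kk by simp
    ultimately have "int (m * cnt b u2) - int (cnt a u2) \<le> int (m * (cnt b u2 + cnt b (take k' r'))) - int (cnt a u2 + cnt a (take k' r'))"
      unfolding F_def u2_def by simp
    hence "int (cnt a (take k' r')) \<le> int (m * cnt b (take k' r'))" by (simp add: algebra_simps)
    hence "cnt a (take k' r') \<le> m * cnt b (take k' r')" by (metis of_nat_le_iff of_nat_mult)
    thus ?thesis using tk by simp
  qed
  define q where "q = cnt a r' div m"
  obtain s3 where s3: "s3 \<le> length r'" "cnt a (take s3 r') = m*q"
    using exists_take_cnt[of "m*q" a r'] unfolding q_def by auto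
  define u3 where "u3 = take s3 r'"
  define u4 where "u4 = drop s3 r'"
  have ueq: "u = u1 @ u2 @ u3 @ u4"
    by (metis append_take_drop_id u1_def u2_def u3_def u4_def r'_def r_def)
  have cr': "cnt a r' = m*q + cnt a u4" using cnt_append[of a u3 u4] s3(2) unfolding u3_def u4_def by simp
  have A4: "cnt a u4 = cnt a r' mod m" using cr' unfolding q_def by (metis add_diff_cancel_left' minus_div_mult_eq_mod mult.commute)
  have A4m: "cnt a u4 < m" using A4 m by simp
  have cr: "cnt a r = m*t" using ta s1 cnt_append[of a u1 r] unfolding u1_def r_def K_def by simp
  have "cnt a r = cnt a u2 + cnt a r'" using cnt_append[of a u2 r'] unfolding u2_def r'_def by simp
  hence A24: "cnt a u2 + cnt a u4 = m*(t - q)" using cr cr' by (simp add: diff_mult_distrib2)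
  have mem2: "u2 \<in> L_eps {b # replicate m a, [a]}" using suffix_mem[OF suf] .
  have mem3: "u3 \<in> L_eps {b # replicate m a, [b]}"
  proof -
    define N3 where "N3 = cnt b u3"
    have "u3 \<in> Sh (map (\<lambda>k. P 0 1 (0+1) @ replicate (if k < q then m else 0) a) [0..<N3])"
    proof (rule core)
      show "cnt b u3 = (0+1)*N3" unfolding N3_def by simp
      show "cnt a u3 = (0+1*0)*N3 + m*q" unfolding u3_def using s3 by simp
      fix s
      show "0 * cnt b (take s u3) \<le> cnt a (take s u3)" by simp
      show "1 * cnt b (take s u3) + 0*N3 \<le> cnt a (take s u3) + 1*N3"
        unfolding N3_def using cnt_take_le[of b s u3] by simp
      show "cnt a (take s u3) \<le> 0*N3 + 1 * cnt b (take s u3)" if "1 \<le> (0::nat)" using that by simp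
      have "take s u3 = take (min s s3) r'" unfolding u3_def by simp
      thus "cnt a (take s u3) + m*0*N3 \<le> (0+1*0)*N3 + m * cnt b (take s u3)" using pr' by simp
    qed simp
    moreover have "set (map (\<lambda>k. P 0 1 (0+1) @ replicate (if k < q then m else 0) a) [0..<N3]) \<subseteq> {b # replicate m a, [b]}"
      by auto
    ultimately show ?thesis by (rule Sh_L_eps)
  qed
  have mem1: "u1 \<in> L_eps {Y @ [a, b], Y @ [a]}"
  proof -
    define x where "x = u1 @ replicate (Suc j * N - B1) b"
    have cbx: "cnt b x = Suc j * N" unfolding x_def using B1le unfolding B1_def by simp
    have cax: "cnt a x = K" unfolding x_def using s1 unfolding u1_def by simp
    have "x \<in> Sh (map (\<lambda>k. P i n (j+1) @ replicate (if k < 0 then m else 0) a) [0..<N])"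
    proof (rule core)
      show "1 \<le> j \<Longrightarrow> 1 \<le> n" using n by simp
      show "cnt b x = (j+1)*N" using cbx by simp
      show "cnt a x = (i+n*j)*N + m*0" using cax unfolding K_def D_def by simp
      fix s
      have "condP i n j m N (cnt a (take s x)) (cnt b (take s x))"
      proof (cases "s \<le> length u1")
        case True
        have "length u1 = s1" unfolding u1_def using s1(1) by simp
        hence "take s x = take s u" using True unfolding x_def u1_def by (simp add: min_def)
        thus ?thesis using cP by simp
      next
        case False
        then obtain e where e: "take s x = u1 @ replicate e b" "e \<le> Suc j * N - B1"
          unfolding x_def by (simp add: take_replicate)
        have ca: "cnt a (take s x) = (i+n*j)*N" using e s1 unfolding u1_def K_def D_def by simp
        have cb: "cnt b (take s x) = B1 + e" using e unfolding B1_def by simp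
        have mm: "m*(j*N) \<le> m*(B1+e)" using jNB1 by (intro mult_le_mono2) simp
        show ?thesis unfolding ca cb
        proof (rule condP_after)
          show "(i + n * j) * N + m * j * N \<le> (i + n * j) * N + m * (B1 + e)" using mm by simp
          show "j * N \<le> B1 + e" using jNB1 by simp
          show "B1 + e \<le> Suc j * N" using e(2) B1le by simp
        qed (use inl jm in auto)
      qed
      thus "i * cnt b (take s x) \<le> cnt a (take s x)"
        "n * cnt b (take s x) + i*N \<le> cnt a (take s x) + n*N"
        "1 \<le> j \<Longrightarrow> cnt a (take s x) \<le> i*N + n * cnt b (take s x)"
        "cnt a (take s x) + m*j*N \<le> (i+n*j)*N + m * cnt b (take s x)"
        unfolding condP_def by auto
    qed
    moreover have "set (map (\<lambda>k. P i n (j+1) @ replicate (if k < 0 then m else 0) a) [0..<N]) \<subseteq> {Y @ [a, b]}"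
      using Y by auto
    ultimately have "x \<in> L_eps {Y @ [a, b]}" by (rule Sh_L_eps)
    thus ?thesis using restrict_b unfolding x_def by blast
  qed
  have fin7: "cnt a u2 + cnt a u4 \<le> m*(pb + cnt b u2)"
  proof -
    have "cnt a u2 \<le> m*(pb + cnt b u2)" using rc[of ks] unfolding u2_def .
    hence "m*(t-q) < m*(pb + cnt b u2) + m" using A24 A4m by linarith
    hence "m*(t-q) < m*(pb + cnt b u2 + 1)" by (simp add: algebra_simps)
    hence "t - q \<le> pb + cnt b u2" using mult_less_cancel1 by (metis Suc_eq_plus1 less_Suc_eq_le)
    hence "m*(t-q) \<le> m*(pb + cnt b u2)" by (rule mult_le_mono2)
    thus ?thesis using A24 by simp
  qed
  show ?thesis
  proof (intro exI conjI)
    show "u = u1 @ u2 @ u3 @ u4" by (rule ueq)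
    show "u1 \<in> L_eps {Y @ [a, b], Y @ [a]}" by (rule mem1)
    show "u2 \<in> L_eps {b # replicate m a, [a]}" by (rule mem2)
    show "u3 \<in> L_eps {b # replicate m a, [b]}" by (rule mem3)
    show "cnt a u4 < m" by (rule A4m)
    show "cnt a (u2 @ u4) mod m = 0" using A24 by simp
    show "cnt a u1 = (i+n*j)*N" using s1 unfolding u1_def K_def D_def by simp
    show "cnt b u = Suc j * N" by (rule tb)
    show "j*N \<le> cnt b u1" using jNB1 unfolding B1_def .
    show "cnt a u2 + cnt a u4 \<le> m*(cnt b u1 - j*N + cnt b u2)" using fin7 unfolding pb_def B1_def .
  qed
qed



lemma lin1: "(y::nat) + \<alpha> \<le> A + z \<Longrightarrow> A + A4 \<le> x + y \<Longrightarrow> \<alpha> \<le> x + z" by linarith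

lemma backward:
  fixes i n j m :: nat and u u1 u2 u3 u4 :: word
  assumes n: "1 \<le> n" and m: "1 \<le> m" and inl: "i \<le> n" and jm: "1 \<le> j \<longrightarrow> m \<le> n"
    and D: "1 \<le> i + n*j"
    and Y: "P i n (Suc j) = Y @ [a, b]"
    and ueq: "u = u1 @ u2 @ u3 @ u4"
    and m1: "u1 \<in> L_eps {Y @ [a, b], Y @ [a]}"
    and m2: "u2 \<in> L_eps {b # replicate m a, [a]}"
    and m3: "u3 \<in> L_eps {b # replicate m a, [b]}"
    and c5: "cnt a (u2 @ u4) mod m = 0"
    and c6: "cnt a u1 * Suc j = (i+n*j) * cnt b u"
    and c7: "\<And>N. cnt a u1 = (i+n*j)*N \<Longrightarrow> j*N \<le> cnt b u1 \<Longrightarrow>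
               cnt a u2 + cnt a u4 \<le> m*(cnt b u1 - j*N + cnt b u2)"
  shows "u \<in> L_eps {P i n (Suc j), P i n (Suc j) @ replicate m a}"
proof -
  define D where "D = i + n*j"
  define W where "W = P i n (Suc j)"
  have cW: "cnt a W = D" "cnt b W = Suc j" unfolding W_def D_def
    by (simp_all add: cnt_concat_replicate)
  define R1 where "R1 = (\<lambda>\<alpha> \<beta> A B N. condP i n j m N \<alpha> \<beta> \<and> A = D*N \<and> j*N \<le> B \<and> B \<le> Suc j * N)"
  have "\<exists>N. \<forall>s. R1 (cnt a (take s u1)) (cnt b (take s u1)) (cnt a u1) (cnt b u1) N"
  proof (rule L_eps_inv[OF m1])
    fix g s assume g: "g \<in> {Y @ [a, b], Y @ [a]}"
    have gc: "condP i n j m 1 (cnt a (take s' W)) (cnt b (take s' W))" for s'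
      using gen_cond[of i n j m 0 s'] inl jm unfolding W_def by simp
    show "R1 (cnt a (take s g)) (cnt b (take s g)) (cnt a g) (cnt b g) 1"
    proof (cases "g = Y @ [a, b]")
      case True
      hence "g = W" using Y unfolding W_def by simp
      thus ?thesis using gc[of s] cW unfolding R1_def by simp
    next
      case False
      hence g2: "g = Y @ [a]" using g by simp
      have Wg: "W = g @ [b]" using Y g2 unfolding W_def by simp
      have "take s g = take (min s (length g)) W" unfolding Wg by (simp add: min_def)
      moreover have "cnt a g = D" "cnt b g = j" using cW Wg by simp_all
      ultimately show ?thesis using gc[of "min s (length g)"] unfolding R1_def by simp
    qed
  next
    show "R1 0 0 0 0 0" unfolding R1_def by (simp add: condP_0)
  next
    fix \<alpha>1 \<beta>1 A1 B1 N1 \<alpha>2 \<beta>2 A2 B2 N2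
    assume "R1 \<alpha>1 \<beta>1 A1 B1 N1" "R1 \<alpha>2 \<beta>2 A2 B2 N2"
    thus "R1 (\<alpha>1+\<alpha>2) (\<beta>1+\<beta>2) (A1+A2) (B1+B2) (N1+N2)"
      using condP_add unfolding R1_def by (auto simp: algebra_simps)
  qed
  then obtain N where RN: "\<And>s. R1 (cnt a (take s u1)) (cnt b (take s u1)) (cnt a u1) (cnt b u1) N" by blast
  have cP1: "\<And>s. condP i n j m N (cnt a (take s u1)) (cnt b (take s u1))" using RN unfolding R1_def by blast
  have A1: "cnt a u1 = D*N" and jB1: "j*N \<le> cnt b u1" and B1le: "cnt b u1 \<le> Suc j * N"
    using RN[of 0] unfolding R1_def by auto
  have "D * (N * Suc j) = D * cnt b u" using c6 A1 unfolding D_def by (simp add: algebra_simps)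
  moreover have "D \<noteq> 0" using D unfolding D_def by linarith
  ultimately have "N * Suc j = cnt b u" by simp
  hence tb: "cnt b u = Suc j * N" by (simp add: mult.commute)
  define R2 where "R2 = (\<lambda>\<alpha> \<beta> A B (N::nat). m*B + \<alpha> \<le> A + m*\<beta>)"
  have "\<exists>N. \<forall>s. R2 (cnt a (take s u2)) (cnt b (take s u2)) (cnt a u2) (cnt b u2) N"
  proof (rule L_eps_inv[OF m2])
    fix g s assume g: "g \<in> {b # replicate m a, [a]}"
    show "R2 (cnt a (take s g)) (cnt b (take s g)) (cnt a g) (cnt b g) 1"
    proof (cases s)
      case 0 thus ?thesis using g unfolding R2_def by auto
    next
      case (Suc s') thus ?thesis using g unfolding R2_def by auto
    qed
  qed (auto simp: R2_def algebra_simps)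
  then obtain N2 where R2N: "\<And>s. m * cnt b u2 + cnt a (take s u2) \<le> cnt a u2 + m * cnt b (take s u2)"
    unfolding R2_def by blast
  define R3 where "R3 = (\<lambda>\<alpha> \<beta> A (B::nat) (N::nat). \<alpha> \<le> m*\<beta> \<and> m dvd A)"
  have "\<exists>N. \<forall>s. R3 (cnt a (take s u3)) (cnt b (take s u3)) (cnt a u3) (cnt b u3) N"
  proof (rule L_eps_inv[OF m3])
    fix g s assume g: "g \<in> {b # replicate m a, [b]}"
    show "R3 (cnt a (take s g)) (cnt b (take s g)) (cnt a g) (cnt b g) 1"
    proof (cases s)
      case 0 thus ?thesis using g unfolding R3_def by auto
    next
      case (Suc s') thus ?thesis using g unfolding R3_def by auto
    qed
  qed (auto simp: R3_def algebra_simps)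
  then obtain N3 where R3N: "\<And>s. cnt a (take s u3) \<le> m * cnt b (take s u3)" and dv3: "m dvd cnt a u3"
    unfolding R3_def by blast
  define pb where "pb = cnt b u1 - j*N"
  have B1e: "cnt b u1 = j*N + pb" unfolding pb_def using jB1 by simp
  have c7': "cnt a u2 + cnt a u4 \<le> m*(pb + cnt b u2)"
    using c7[OF A1[unfolded D_def] jB1] unfolding pb_def .
  have A3: "cnt a u3 \<le> m * cnt b u3" using R3N[of "length u3"] by simp
  define v where "v = u2 @ u3 @ u4"
  have rest: "cnt a (take s' v) \<le> m*(pb + cnt b (take s' v))" for s'
  proof (cases "s' \<le> length u2")
    case True
    hence tv: "take s' v = take s' u2" unfolding v_def by simp
    have h1: "m * cnt b u2 + cnt a (take s' u2) \<le> cnt a u2 + m * cnt b (take s' u2)" by (rule R2N)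
    have h2: "m*(pb + cnt b u2) = m*pb + m*cnt b u2" by (simp add: algebra_simps)
    have h3: "m*(pb + cnt b (take s' u2)) = m*pb + m*cnt b (take s' u2)" by (simp add: algebra_simps)
    have h4: "cnt a u2 + cnt a u4 \<le> m*pb + m*cnt b u2" using c7' h2 by simp
    have "cnt a (take s' u2) \<le> m*pb + m*cnt b (take s' u2)" using lin1[OF h1 h4] .
    hence "cnt a (take s' u2) \<le> m*(pb + cnt b (take s' u2))" using h3 by simp
    thus ?thesis using tv by simp
  next
    case False
    note F1 = False
    show ?thesis
    proof (cases "s' \<le> length u2 + length u3")
      case True
      hence tv: "take s' v = u2 @ take (s' - length u2) u3" unfolding v_def using F1 by simp
      have "cnt a (take (s' - length u2) u3) \<le> m * cnt b (take (s' - length u2) u3)" by (rule R3N)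
      moreover have "m*(pb + (cnt b u2 + cnt b (take (s' - length u2) u3))) = m*(pb + cnt b u2) + m*cnt b (take (s' - length u2) u3)"
        by (simp add: algebra_simps)
      ultimately show ?thesis unfolding tv using c7' by simp
    next
      case False
      hence tv: "take s' v = u2 @ u3 @ take (s' - length u2 - length u3) u4" unfolding v_def using F1 by simp
      have "cnt a (take (s' - length u2 - length u3) u4) \<le> cnt a u4" by (rule cnt_take_le)
      moreover have "m*(pb + (cnt b u2 + (cnt b u3 + cnt b (take (s' - length u2 - length u3) u4)))) \<ge> m*(pb + cnt b u2) + m*cnt b u3"
        by (simp add: algebra_simps)
      ultimately show ?thesis unfolding tv using c7' A3 by simp
    qed
  qed
  have cP: "condP i n j m N (cnt a (take s u)) (cnt b (take s u))" for s
  proof (cases "s \<le> length u1")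
    case True
    hence "take s u = take s u1" unfolding ueq by simp
    thus ?thesis using cP1 by simp
  next
    case False
    hence tu: "take s u = u1 @ take (s - length u1) v" unfolding ueq v_def by simp
    have bl: "cnt b (take s u) \<le> Suc j * N" using cnt_take_le[of b s u] tb by simp
    have r: "cnt a (take (s - length u1) v) \<le> m*(pb + cnt b (take (s - length u1) v))" by (rule rest)
    show ?thesis
    proof (rule condP_after)
      show "(i + n * j) * N \<le> cnt a (take s u)" unfolding tu using A1 unfolding D_def by simp
      have "m*(cnt b (take s u)) = m*(j*N) + m*(pb + cnt b (take (s - length u1) v))"
        unfolding tu using B1e by (simp add: algebra_simps)
      thus "cnt a (take s u) + m * j * N \<le> (i + n * j) * N + m * cnt b (take s u)"
        unfolding tu using A1 r unfolding D_def by simp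
      show "j * N \<le> cnt b (take s u)" unfolding tu using jB1 by simp
      show "cnt b (take s u) \<le> Suc j * N" by (rule bl)
    qed (use inl jm in auto)
  qed
  have dv24: "m dvd (cnt a u2 + cnt a u4)" using c5 by (simp add: mod_eq_0_iff_dvd)
  then obtain t where t: "cnt a u2 + cnt a u3 + cnt a u4 = m*t" using dv3
    by (metis add.commute add.left_commute dvd_add dvd_def)
  have ta: "cnt a u = (i+n*j)*N + m*t" using A1 t unfolding ueq D_def by simp
  have "u \<in> Sh (map (\<lambda>k. P i n (j+1) @ replicate (if k < t then m else 0) a) [0..<N])"
  proof (rule core)
    show "1 \<le> j \<Longrightarrow> 1 \<le> n" using n by simp
    show "cnt b u = (j+1)*N" using tb by simp
    show "cnt a u = (i+n*j)*N + m*t" by (rule ta)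
    fix s
    show "i * cnt b (take s u) \<le> cnt a (take s u)"
        "n * cnt b (take s u) + i*N \<le> cnt a (take s u) + n*N"
        "1 \<le> j \<Longrightarrow> cnt a (take s u) \<le> i*N + n * cnt b (take s u)"
        "cnt a (take s u) + m*j*N \<le> (i+n*j)*N + m * cnt b (take s u)"
      using cP[of s] unfolding condP_def by auto
  qed
  moreover have "set (map (\<lambda>k. P i n (j+1) @ replicate (if k < t then m else 0) a) [0..<N])
      \<subseteq> {P i n (Suc j), P i n (Suc j) @ replicate m a}" by auto
  ultimately show ?thesis by (rule Sh_L_eps)
qed



lemma real7:
  fixes D N j m A2 A4 B2 n :: nat and u1 w :: word
  assumes a1: "cnt a u1 = D*N" and jN: "j*N \<le> cnt b u1" and D: "0 < D"
    and lw: "length w + n = D + j" and cw: "cnt a w + n = D" and m: "0 < m"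
  shows "((real A2 + real A4) / real m - real B2
          \<le> real (length u1) - real (cnt a u1) * (real (length w) + real n) / (real (cnt a w) + real n))
     \<longleftrightarrow> A2 + A4 \<le> m * (cnt b u1 - j*N + B2)"
proof -
  have e1: "real (length w) + real n = real D + real j" using lw by (metis of_nat_add)
  have e2: "real (cnt a w) + real n = real D" using cw by (metis of_nat_add)
  have e3: "real (length u1) = real D * real N + real (cnt b u1)" using len_cnt[of u1] a1 by simp
  have e4: "real (cnt a u1) * (real (length w) + real n) / (real (cnt a w) + real n) = real N * (real D + real j)"
    unfolding e1 e2 using a1 D by (simp add: field_simps)
  have e5: "real (cnt b u1 - j*N) = real (cnt b u1) - real j * real N" using jN by (simp add: of_nat_diff)
  have e6: "real (length u1) - real (cnt a u1) * (real (length w) + real n) / (real (cnt a w) + real n)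
      = real (cnt b u1 - j*N)"
    unfolding e4 e3 e5 by (simp add: algebra_simps)
  have "((real A2 + real A4) / real m - real B2
          \<le> real (length u1) - real (cnt a u1) * (real (length w) + real n) / (real (cnt a w) + real n))
      \<longleftrightarrow> (real A2 + real A4) / real m \<le> real (cnt b u1 - j*N) + real B2"
    unfolding e6 by linarith
  also have "\<dots> \<longleftrightarrow> real A2 + real A4 \<le> (real (cnt b u1 - j*N) + real B2) * real m"
    using m by (simp add: pos_divide_le_eq)
  also have "\<dots> \<longleftrightarrow> real (A2 + A4) \<le> real ((cnt b u1 - j*N + B2) * m)" by simp
  also have "\<dots> \<longleftrightarrow> A2 + A4 \<le> m * (cnt b u1 - j*N + B2)" by (simp only: of_nat_le_iff mult.commute)
  finally show ?thesis .
qed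

theorem proposition8:
  fixes n m :: nat and w u :: word
  assumes "n \<ge> 1" and "m \<ge> 1"
    and "w = [] \<or> (\<exists>i k. i \<le> n \<and> w = pw a i @ concat (replicate k (b # pw a n)) @ [b])"
    and "good (w @ pw a n @ [b] @ pw a m)"
  shows "u \<in> L_eps {w @ pw a n @ [b], w @ pw a n @ [b] @ pw a m} \<longleftrightarrow>
    (\<exists>u1 u2 u3 u4. u = u1 @ u2 @ u3 @ u4
       \<and> u1 \<in> L_eps {w @ pw a n @ [b], w @ pw a n}
       \<and> u2 \<in> L_eps {b # pw a m, [a]}
       \<and> u3 \<in> L_eps {b # pw a m, [b]}
       \<and> cnt a u4 < m
       \<and> cnt a (u2 @ u4) mod m = 0
       \<and> cnt a u1 * (cnt b w + 1) = (cnt a w + n) * cnt b u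
       \<and> (real (cnt a u2) + real (cnt a u4)) / real m - real (cnt b u2)
           \<le> real (length u1) - real (cnt a u1) * (real (length w) + real n) / (real (cnt a w) + real n))"
proof -
  obtain i j where sh: "w @ replicate n a @ [b] = P i n (Suc j)" "i \<le> n" "1 \<le> j \<longrightarrow> m \<le> n"
      "cnt a w + n = i + n*j" "cnt b w = j" "1 \<le> i + n*j"
    using w_shape[OF assms(1) assms(3) assms(4)] by blast
  define Y where "Y = w @ replicate (n - 1) a"
  obtain n' where n': "n = Suc n'" using assms(1) by (cases n) auto
  have wn: "w @ replicate n a = Y @ [a]" unfolding Y_def n' by (simp add: replicate_append_same[symmetric])
  have WY: "P i n (Suc j) = Y @ [a, b]"
  proof -
    have "P i n (Suc j) = (w @ replicate n a) @ [b]" using sh(1) by simp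
    thus ?thesis unfolding wn by simp
  qed
  have S1: "{w @ pw a n @ [b], w @ pw a n @ [b] @ pw a m} = {P i n (Suc j), P i n (Suc j) @ replicate m a}"
  proof -
    have "w @ pw a n @ [b] @ pw a m = (w @ replicate n a @ [b]) @ replicate m a" by simp
    also have "\<dots> = P i n (Suc j) @ replicate m a" by (simp only: sh(1))
    finally have e: "w @ pw a n @ [b] @ pw a m = P i n (Suc j) @ replicate m a" .
    have e': "w @ pw a n @ [b] = P i n (Suc j)" using sh(1) by (simp only: pw_simps)
    show ?thesis by (simp only: e e')
  qed
  have S2: "{w @ pw a n @ [b], w @ pw a n} = {Y @ [a, b], Y @ [a]}"
  proof -
    have "w @ pw a n @ [b] = (w @ replicate n a) @ [b]" by simp
    also have "\<dots> = Y @ [a, b]" by (simp only: wn) simp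
    finally have e: "w @ pw a n @ [b] = Y @ [a, b]" .
    have e': "w @ pw a n = Y @ [a]" using wn by (simp only: pw_simps)
    show ?thesis by (simp only: e e')
  qed
  have S3: "{b # pw a m, [a]} = {b # replicate m a, [a]}" "{b # pw a m, [b]} = {b # replicate m a, [b]}"
    by simp_all
  have lw: "length w + n = (i + n*j) + j" using len_cnt[of w] sh(4) sh(5) by simp
  have Dpos: "0 < i + n*j" using sh(6) by linarith
  have mpos: "0 < m" using assms(2) by simp
  show ?thesis
  proof
    assume "u \<in> L_eps {w @ pw a n @ [b], w @ pw a n @ [b] @ pw a m}"
    hence uL: "u \<in> L_eps {P i n (Suc j), P i n (Suc j) @ replicate m a}" using S1 by simp
    obtain u1 u2 u3 u4 N where f: "u = u1 @ u2 @ u3 @ u4"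
       "u1 \<in> L_eps {Y @ [a, b], Y @ [a]}"
       "u2 \<in> L_eps {b # replicate m a, [a]}"
       "u3 \<in> L_eps {b # replicate m a, [b]}"
       "cnt a u4 < m"
       "cnt a (u2 @ u4) mod m = 0"
       "cnt a u1 = (i+n*j)*N" "cnt b u = Suc j * N" "j*N \<le> cnt b u1"
       "cnt a u2 + cnt a u4 \<le> m*(cnt b u1 - j*N + cnt b u2)"
      using forward[OF assms(1) assms(2) sh(2) sh(3) sh(6) uL WY] by (elim exE conjE) (rule that)
    have c6: "cnt a u1 * (cnt b w + 1) = (cnt a w + n) * cnt b u"
      using f(7) f(8) sh(4) sh(5) by (simp add: algebra_simps)
    have c7: "(real (cnt a u2) + real (cnt a u4)) / real m - real (cnt b u2)
           \<le> real (length u1) - real (cnt a u1) * (real (length w) + real n) / (real (cnt a w) + real n)"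
      using real7[OF f(7) f(9) Dpos lw sh(4) mpos] f(10) by blast
    show "\<exists>u1 u2 u3 u4. u = u1 @ u2 @ u3 @ u4
       \<and> u1 \<in> L_eps {w @ pw a n @ [b], w @ pw a n}
       \<and> u2 \<in> L_eps {b # pw a m, [a]}
       \<and> u3 \<in> L_eps {b # pw a m, [b]}
       \<and> cnt a u4 < m
       \<and> cnt a (u2 @ u4) mod m = 0
       \<and> cnt a u1 * (cnt b w + 1) = (cnt a w + n) * cnt b u
       \<and> (real (cnt a u2) + real (cnt a u4)) / real m - real (cnt b u2)
           \<le> real (length u1) - real (cnt a u1) * (real (length w) + real n) / (real (cnt a w) + real n)"
      unfolding S2 S3 using f(1-6) c6 c7 by (intro exI[of _ u1] exI[of _ u2] exI[of _ u3] exI[of _ u4] conjI)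
  next
    assume "\<exists>u1 u2 u3 u4. u = u1 @ u2 @ u3 @ u4
       \<and> u1 \<in> L_eps {w @ pw a n @ [b], w @ pw a n}
       \<and> u2 \<in> L_eps {b # pw a m, [a]}
       \<and> u3 \<in> L_eps {b # pw a m, [b]}
       \<and> cnt a u4 < m
       \<and> cnt a (u2 @ u4) mod m = 0
       \<and> cnt a u1 * (cnt b w + 1) = (cnt a w + n) * cnt b u
       \<and> (real (cnt a u2) + real (cnt a u4)) / real m - real (cnt b u2)
           \<le> real (length u1) - real (cnt a u1) * (real (length w) + real n) / (real (cnt a w) + real n)"
    then obtain u1 u2 u3 u4 where g: "u = u1 @ u2 @ u3 @ u4"
       "u1 \<in> L_eps {Y @ [a, b], Y @ [a]}"
       "u2 \<in> L_eps {b # replicate m a, [a]}"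
       "u3 \<in> L_eps {b # replicate m a, [b]}"
       "cnt a (u2 @ u4) mod m = 0"
       "cnt a u1 * (cnt b w + 1) = (cnt a w + n) * cnt b u"
       "(real (cnt a u2) + real (cnt a u4)) / real m - real (cnt b u2)
           \<le> real (length u1) - real (cnt a u1) * (real (length w) + real n) / (real (cnt a w) + real n)"
      unfolding S2 S3 by (elim exE conjE) (rule that)
    have c6: "cnt a u1 * Suc j = (i+n*j) * cnt b u" using g(6) sh(4) sh(5) by simp
    have c7: "cnt a u2 + cnt a u4 \<le> m*(cnt b u1 - j*N + cnt b u2)"
      if "cnt a u1 = (i+n*j)*N" "j*N \<le> cnt b u1" for N
      using real7[OF that Dpos lw sh(4) mpos] g(7) by blast
    have "u \<in> L_eps {P i n (Suc j), P i n (Suc j) @ replicate m a}"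
      by (rule backward[OF assms(1) assms(2) sh(2) sh(3) sh(6) WY g(1) g(2) g(3) g(4) g(5) c6 c7])
    thus "u \<in> L_eps {w @ pw a n @ [b], w @ pw a n @ [b] @ pw a m}" using S1 by simp
  qed
qed


end
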